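(* Every exceptional domestic duality of a building $\mathsf{A}_n(2)$ (the projective space $\mathsf{PG}(n,2)$, $n\geq 2$) is strongly exceptional domestic.
   Context: Types of $\mathsf{PG}(n,2)$ are $1,\ldots,n$ (type $i$: $(i-1)$-dimensional subspaces), $S=\{1,\ldots,n\}$. A duality is an automorphism with type map $i\mapsto n+1-i$; composing with opposition $i\mapsto n+1-i$ gives the identity on $S$. Simplices are opposite if every chamber containing either is opposite some chamber containing the other. For $J\subseteq S$, $\theta$ is $J$-domestic if no simplex of type $J$ is mapped to an opposite; domestic if no chamber is mapped to an opposite; exceptional domestic if domestic and every $i\in S$ lies in the type of some simplex mapped to an opposite; strongly exceptional domestic if domestic but not $J$-domestic for any proper subset $J\subsetneq S$ (for dualities of $\mathsf{A}_n$ this means: for each cotype $i$ there is a panel of cotype $i$ mapped to an opposite panel). *)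

theory Defs
  imports "HOL-Analysis.Cartesian_Space" "HOL-Library.Z2"
begin

text \<open>The projective space PG(n,2) is modelled by the vector space V = GF(2)^(n+1),
  realised as bit ^ 'n with CARD('n) = n + 1.  The vertices (elements) of the building
  A_n(2) are the proper nonzero subspaces; a subspace of vector-space dimension i
  (projective dimension i - 1) has type i, so types range over S = {1..n}.\<close>

definition rk :: "'n::finite itself \<Rightarrow> nat" where
  "rk _ = CARD('n) - 1"

definition typeset :: "'n::finite itself \<Rightarrow> nat set" where
  "typeset T = {1..rk T}"

definition is_elem :: "(bit ^ 'n::finite) set \<Rightarrow> bool" where
  "is_elem U \<longleftrightarrow> vec.subspace U \<and> 1 \<le> vec.dim U \<and> vec.dim U \<le> rk TYPE('n)"

definition elem_type :: "(bit ^ 'n::finite) set \<Rightarrow> nat" where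
  "elem_type U = vec.dim U"

definition is_simplex :: "(bit ^ 'n::finite) set set \<Rightarrow> bool" where
  "is_simplex F \<longleftrightarrow> (\<forall>U\<in>F. is_elem U) \<and> (\<forall>U\<in>F. \<forall>W\<in>F. U \<subseteq> W \<or> W \<subseteq> U)"

definition simplex_type :: "(bit ^ 'n::finite) set set \<Rightarrow> nat set" where
  "simplex_type F = elem_type ` F"

definition is_chamber :: "(bit ^ 'n::finite) set set \<Rightarrow> bool" where
  "is_chamber C \<longleftrightarrow> is_simplex C \<and> simplex_type C = typeset TYPE('n)"

definition opp_chambers :: "(bit ^ 'n::finite) set set \<Rightarrow> (bit ^ 'n) set set \<Rightarrow> bool" where
  "opp_chambers C D \<longleftrightarrow> is_chamber C \<and> is_chamber D \<and>
     (\<forall>U\<in>C. \<forall>W\<in>D. elem_type U + elem_type W = rk TYPE('n) + 1 \<longrightarrow> U \<inter> W = {0})"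

definition opp_simplices :: "(bit ^ 'n::finite) set set \<Rightarrow> (bit ^ 'n) set set \<Rightarrow> bool" where
  "opp_simplices A B \<longleftrightarrow> is_simplex A \<and> is_simplex B \<and>
     (\<forall>C. is_chamber C \<and> A \<subseteq> C \<longrightarrow> (\<exists>D. is_chamber D \<and> B \<subseteq> D \<and> opp_chambers C D)) \<and>
     (\<forall>D. is_chamber D \<and> B \<subseteq> D \<longrightarrow> (\<exists>C. is_chamber C \<and> A \<subseteq> C \<and> opp_chambers C D))"

definition is_duality :: "((bit ^ 'n::finite) set \<Rightarrow> (bit ^ 'n) set) \<Rightarrow> bool" where
  "is_duality \<theta> \<longleftrightarrow> bij_betw \<theta> {U. is_elem U} {U. is_elem U} \<and>
     (\<forall>U W. is_elem U \<and> is_elem W \<longrightarrow>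
        ((U \<subseteq> W \<or> W \<subseteq> U) \<longleftrightarrow> (\<theta> U \<subseteq> \<theta> W \<or> \<theta> W \<subseteq> \<theta> U))) \<and>
     (\<forall>U. is_elem U \<longrightarrow> elem_type (\<theta> U) = rk TYPE('n) + 1 - elem_type U)"

definition J_domestic :: "nat set \<Rightarrow> ((bit ^ 'n::finite) set \<Rightarrow> (bit ^ 'n) set) \<Rightarrow> bool" where
  "J_domestic J \<theta> \<longleftrightarrow>
     \<not> (\<exists>A. is_simplex A \<and> simplex_type A = J \<and> opp_simplices A (\<theta> ` A))"

definition domestic :: "((bit ^ 'n::finite) set \<Rightarrow> (bit ^ 'n) set) \<Rightarrow> bool" where
  "domestic \<theta> \<longleftrightarrow> J_domestic (typeset TYPE('n)) \<theta>"

definition exceptional_domestic :: "((bit ^ 'n::finite) set \<Rightarrow> (bit ^ 'n) set) \<Rightarrow> bool" where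
  "exceptional_domestic \<theta> \<longleftrightarrow> domestic \<theta> \<and>
     (\<forall>i\<in>typeset TYPE('n). \<exists>A. is_simplex A \<and> i \<in> simplex_type A \<and> opp_simplices A (\<theta> ` A))"

definition strongly_exceptional_domestic :: "((bit ^ 'n::finite) set \<Rightarrow> (bit ^ 'n) set) \<Rightarrow> bool" where
  "strongly_exceptional_domestic \<theta> \<longleftrightarrow> domestic \<theta> \<and>
     (\<forall>J. J \<subset> typeset TYPE('n) \<longrightarrow> \<not> J_domestic J \<theta>)"

end

theory Submission
  imports Defs
begin

lemma bit_add_self [simp]: "(x::bit^'n) + x = 0"
  by (simp add: vec_eq_iff)

lemma bit_vec_uminus [simp]: "- (x::bit^'n) = x"
  by (rule minus_unique[OF bit_add_self])

lemma bit_vec_minus [simp]: "(x::bit^'n) - y = x + y"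
  by (simp add: diff_conv_add_uminus)

lemma bit_two_vec [simp]: "2 * (a::bit^'n) = 0"
  by (simp add: vec_eq_iff)

lemma bit_vec_cancel [simp]: "a + (x + a) = (x::bit^'n)" "a + (a + x) = x" "(x + a) + a = x"
  by (simp_all add: add.assoc[symmetric] add.commute[of x a])

lemma bit_cases2: "(c::bit) = 0 \<or> c = 1" by (cases c) auto

lemma bit_one_one [simp]: "(1::bit) + 1 = 0"
  by (simp flip: one_add_one)

lemma bit_UNIV: "(UNIV::bit set) = {0,1}" using bit_cases2 by auto

lemma span_single: "vec.span {a::bit^'n} = {0, a}"
  by (simp add: vec.span_singleton bit_UNIV)

lemma subspace_bit: "vec.subspace (S::(bit^'n) set) \<longleftrightarrow> 0 \<in> S \<and> (\<forall>x\<in>S. \<forall>y\<in>S. x + y \<in> S)"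
proof
  assume "vec.subspace S" then show "0 \<in> S \<and> (\<forall>x\<in>S. \<forall>y\<in>S. x + y \<in> S)"
    by (simp add: vec.subspace_0 vec.subspace_add)
next
  assume h: "0 \<in> S \<and> (\<forall>x\<in>S. \<forall>y\<in>S. x + y \<in> S)"
  have "\<forall>c. \<forall>x\<in>S. c *s x \<in> S"
  proof (intro allI ballI)
    fix c :: bit and x assume "x \<in> S"
    then show "c *s x \<in> S" using h bit_cases2[of c] by auto
  qed
  then show "vec.subspace S" using h unfolding vec.subspace_def by auto
qed

lemma span_insert_sub:
  assumes "vec.subspace (S::(bit^'n) set)"
  shows "vec.span (insert a S) = S \<union> (\<lambda>x. a + x) ` S"
proof -
  have sp: "vec.span S = S" using assms by simp
  show ?thesis
  proof (rule set_eqI)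
    fix x
    have "x \<in> vec.span (insert a S) \<longleftrightarrow> (\<exists>k. x - k *s a \<in> S)"
      by (simp add: vec.span_insert sp)
    also have "\<dots> \<longleftrightarrow> x \<in> S \<or> x + a \<in> S"
    proof
      assume "\<exists>k. x - k *s a \<in> S" then obtain k where "x - k *s a \<in> S" by blast
      then show "x \<in> S \<or> x + a \<in> S" using bit_cases2[of k] by auto
    next
      assume h: "x \<in> S \<or> x + a \<in> S"
      show "\<exists>k. x - k *s a \<in> S"
      proof (cases "x \<in> S")
        case True then show ?thesis by (intro exI[of _ 0]) simp
      next
        case False then show ?thesis using h by (intro exI[of _ 1]) simp
      qed
    qed
    also have "\<dots> \<longleftrightarrow> x \<in> S \<union> (\<lambda>x. a + x) ` S"
    proof
      assume h: "x \<in> S \<or> x + a \<in> S"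
      have "x = a + (x + a)" by simp
      then show "x \<in> S \<union> (\<lambda>x. a + x) ` S" using h by blast
    next
      assume "x \<in> S \<union> (\<lambda>x. a + x) ` S" then show "x \<in> S \<or> x + a \<in> S" by auto
    qed
    finally show "x \<in> vec.span (insert a S) \<longleftrightarrow> x \<in> S \<union> (\<lambda>x. a + x) ` S" .
  qed
qed

lemma dim_insert_sub:
  assumes "vec.subspace (S::(bit^'n) set)" "a \<notin> S"
  shows "vec.dim (vec.span (insert a S)) = vec.dim S + 1"
proof -
  have "vec.span S = S" using assms by simp
  then have "a \<notin> vec.span S" using assms(2) by (simp only: not_False_eq_True)
  then have "vec.dim (insert a S) = vec.dim S + 1" by (simp only: vec.dim_insert if_False)
  then show ?thesis by (simp only: vec.dim_span)
qed

lemma dim_sum: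
  assumes "vec.subspace (S::(bit^'n::finite) set)" "vec.subspace T"
  shows "vec.dim (vec.span (S \<union> T)) + vec.dim (S \<inter> T) = vec.dim S + vec.dim T"
proof -
  have "vec.span (S \<union> T) = {x + y |x y. x \<in> S \<and> y \<in> T}"
  proof -
    have "vec.span S = S" "vec.span T = T" using assms by simp_all
    then show ?thesis by (simp only: vec.span_Un)
  qed
  then show ?thesis using vec.dim_sums_Int[OF assms] by (simp only:)
qed

lemma dim0_iff:
  assumes "vec.subspace (S::(bit^'n::finite) set)"
  shows "vec.dim S = 0 \<longleftrightarrow> S = {0}"
proof -
  have "0 \<in> S" using assms by (rule vec.subspace_0)
  then show ?thesis using vec.dim_eq_0[of S] by auto
qed

lemma dimN: "vec.dim (UNIV::(bit^'n::finite) set) = CARD('n)"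
  by (rule vec_dim_card)

lemma dim_le_N: "vec.dim (S::(bit^'n::finite) set) \<le> CARD('n)"
proof -
  have "vec.dim S \<le> vec.dim (UNIV::(bit^'n) set)" by (rule vec.dim_subset) simp
  then show ?thesis by (simp only: dimN)
qed

lemma subspace_eq:
  assumes "vec.subspace (S::(bit^'n::finite) set)" "vec.subspace T" "S \<subseteq> T" "vec.dim T \<le> vec.dim S"
  shows "S = T"
  using vec.subspace_dim_equal assms by blast

lemma dimN_eq:
  assumes "vec.subspace (S::(bit^'n::finite) set)" "vec.dim S = CARD('n)"
  shows "S = UNIV"
proof -
  have "vec.dim (UNIV::(bit^'n) set) \<le> vec.dim S" using assms(2) by (simp only: dimN order_refl)
  then show ?thesis by (rule subspace_eq[OF assms(1) vec.subspace_UNIV subset_UNIV])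
qed

lemma dim_single: "(a::bit^'n::finite) \<noteq> 0 \<Longrightarrow> vec.dim (vec.span {a}) = 1"
  by simp

definition ind :: "(bit^'n::finite) set \<Rightarrow> bit^'n \<Rightarrow> bit" where
  "ind H y = (if y \<in> H then 0 else 1)"

lemma card_pos: "0 < CARD('n::finite)" by simp

lemma hyper_add:
  assumes "vec.subspace (H::(bit^'n::finite) set)" "vec.dim H = CARD('n) - 1" "y \<notin> H" "z \<notin> H"
  shows "y + z \<in> H"
proof -
  have "vec.dim (vec.span (insert y H)) = CARD('n)"
    using dim_insert_sub[OF assms(1,3)] assms(2) card_pos[where 'n='n] by simp
  then have "vec.span (insert y H) = UNIV" by (rule dimN_eq[OF vec.subspace_span])
  then have "z \<in> vec.span (insert y H)" by simp
  then have "z \<in> H \<union> (\<lambda>x. y + x) ` H" by (simp only: span_insert_sub[OF assms(1)])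
  then obtain h where "h \<in> H" "z = y + h" using assms(4) by blast
  then show ?thesis by simp
qed

lemma ind_add:
  assumes "vec.subspace (H::(bit^'n::finite) set)" "vec.dim H = CARD('n) - 1"
  shows "ind H (y + z) = ind H y + ind H z"
proof -
  have s: "\<And>u w. u \<in> H \<Longrightarrow> w \<in> H \<Longrightarrow> u + w \<in> H" using assms(1) by (simp add: vec.subspace_add)
  show ?thesis
  proof (cases "y \<in> H")
    case yin: True
    show ?thesis
    proof (cases "z \<in> H")
      case True then show ?thesis using yin s by (simp add: ind_def)
    next
      case False
      have "y + z \<notin> H"
      proof
        assume "y + z \<in> H" then have "y + (y + z) \<in> H" using s yin by blast
        then show False using False by simp
      qed
      then show ?thesis using yin False by (simp add: ind_def)
    qed
  next
    case yout: False
    show ?thesis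
    proof (cases "z \<in> H")
      case True
      have "y + z \<notin> H"
      proof
        assume "y + z \<in> H" then have "(y + z) + z \<in> H" using s True by blast
        then show False using yout by simp
      qed
      then show ?thesis using yout True by (simp add: ind_def)
    next
      case False
      then show ?thesis using yout hyper_add[OF assms yout False] by (simp add: ind_def)
    qed
  qed
qed

lemma set_arith1:
  assumes "2 \<le> i" "i < (m::nat)"
  shows "insert 1 ((\<lambda>k. k + 1) ` ({1..<m - 1} - {i - 1})) = {1..<m} - {i}"
proof
  show "insert 1 ((\<lambda>k. k + 1) ` ({1..<m - 1} - {i - 1})) \<subseteq> {1..<m} - {i}"
    using assms by auto
  show "{1..<m} - {i} \<subseteq> insert 1 ((\<lambda>k. k + 1) ` ({1..<m - 1} - {i - 1}))"
  proof
    fix k assume k: "k \<in> {1..<m} - {i}"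
    show "k \<in> insert 1 ((\<lambda>k. k + 1) ` ({1..<m - 1} - {i - 1}))"
    proof (cases "k = 1")
      case False
      then have "k = (k - 1) + 1" "k - 1 \<in> {1..<m - 1} - {i - 1}" using k assms by auto
      then show ?thesis by blast
    qed simp
  qed
qed

lemma set_arith2:
  assumes "3 \<le> (m::nat)"
  shows "(\<lambda>k. m - k) ` ({1..<m} - {m - 1}) = {1..<m} - {1}"
proof
  show "(\<lambda>k. m - k) ` ({1..<m} - {m - 1}) \<subseteq> {1..<m} - {1}" using assms by auto
  show "{1..<m} - {1} \<subseteq> (\<lambda>k. m - k) ` ({1..<m} - {m - 1})"
  proof
    fix k assume k: "k \<in> {1..<m} - {1}"
    then have "k = m - (m - k)" "m - k \<in> {1..<m} - {m - 1}" using assms by auto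
    then show "k \<in> (\<lambda>k. m - k) ` ({1..<m} - {m - 1})" by blast
  qed
qed

lemma cons_flag:
  fixes c :: "nat \<Rightarrow> (bit^'n::finite) set" and B :: "(bit^'n) set set"
  assumes c0: "c 0 = {0}"
    and csub: "\<And>k. k < CARD('n) \<Longrightarrow> vec.subspace (c k)"
    and cmono: "\<And>j k. j \<le> k \<Longrightarrow> k < CARD('n) \<Longrightarrow> c j \<subseteq> c k"
    and clip: "\<And>j k. j \<le> k \<Longrightarrow> k < CARD('n) \<Longrightarrow> vec.dim (c k) \<le> vec.dim (c j) + (k - j)"
    and Bsub: "\<And>W. W \<in> B \<Longrightarrow> vec.subspace W \<and> 1 \<le> vec.dim W \<and> vec.dim W < CARD('n)"
    and Bchain: "\<And>W W'. W \<in> B \<Longrightarrow> W' \<in> B \<Longrightarrow> W \<subseteq> W' \<or> W' \<subseteq> W"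
    and Bgp: "\<And>W. W \<in> B \<Longrightarrow> W \<inter> c (CARD('n) - vec.dim W) = {0}"
  shows "\<exists>d. (\<forall>k\<le>CARD('n). vec.subspace (d k) \<and> vec.dim (d k) = k \<and> (0 < k \<longrightarrow> d k \<inter> c (CARD('n) - k) = {0}))
            \<and> (\<forall>j k. j \<le> k \<longrightarrow> k \<le> CARD('n) \<longrightarrow> d j \<subseteq> d k) \<and> (\<forall>W\<in>B. d (vec.dim W) = W)"
proof -
  have Beq: "W = W'" if "W \<in> B" "W' \<in> B" "vec.dim W = vec.dim W'" for W W'
  proof -
    have s: "vec.subspace W" "vec.subspace W'" using Bsub that by simp_all
    from Bchain[OF that(1,2)] show ?thesis
    proof
      assume "W \<subseteq> W'" then show ?thesis using subspace_eq[OF s] that(3) by simp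
    next
      assume "W' \<subseteq> W" then show ?thesis using subspace_eq[OF s(2,1)] that(3) by simp
    qed
  qed
  define P where "P K d \<longleftrightarrow> (\<forall>k\<le>K. vec.subspace (d k) \<and> vec.dim (d k) = k \<and> (0 < k \<longrightarrow> d k \<inter> c (CARD('n) - k) = {0})
      \<and> (\<forall>W\<in>B. vec.dim W \<le> k \<longrightarrow> W \<subseteq> d k) \<and> (\<forall>W\<in>B. k \<le> vec.dim W \<longrightarrow> d k \<subseteq> W))
      \<and> (\<forall>j k. j \<le> k \<longrightarrow> k \<le> K \<longrightarrow> d j \<subseteq> d k)" for K and d :: "nat \<Rightarrow> (bit^'n) set"
  have main: "K \<le> CARD('n) \<Longrightarrow> \<exists>d. P K d" for K
  proof (induction K)
    case 0
    have "P 0 (\<lambda>_. {0})" unfolding P_def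
    proof (intro conjI allI impI ballI)
      fix k W assume "k \<le> (0::nat)" "W \<in> B" "vec.dim W \<le> k"
      then show "W \<subseteq> {0}" using Bsub by fastforce
    next
      fix k W assume "W \<in> B"
      then show "{0} \<subseteq> W" using Bsub vec.subspace_0 by blast
    qed simp_all
    then show ?case by blast
  next
    case (Suc K)
    then obtain d where d: "P K d" by auto
    have dall: "vec.subspace (d k) \<and> vec.dim (d k) = k \<and> (0 < k \<longrightarrow> d k \<inter> c (CARD('n) - k) = {0})
      \<and> (\<forall>W\<in>B. vec.dim W \<le> k \<longrightarrow> W \<subseteq> d k) \<and> (\<forall>W\<in>B. k \<le> vec.dim W \<longrightarrow> d k \<subseteq> W)" if "k \<le> K" for k
      using d that unfolding P_def by blast
    have dmono: "d j \<subseteq> d k" if "j \<le> k" "k \<le> K" for j k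
      using d that unfolding P_def by blast
    have dK: "vec.subspace (d K)" "vec.dim (d K) = K" "\<forall>W\<in>B. vec.dim W \<le> K \<longrightarrow> W \<subseteq> d K"
      "\<forall>W\<in>B. K \<le> vec.dim W \<longrightarrow> d K \<subseteq> W" using dall[of K] by simp_all
    have SK: "Suc K \<le> CARD('n)" by fact
    define C' where "C' = c (CARD('n) - Suc K)"
    have C's: "vec.subspace C'" unfolding C'_def using SK by (intro csub) simp
    have dKC: "d K \<inter> C' = {0}"
    proof (cases "K = 0")
      case True
      then have "d K = {0}" using dK(1,2) dim0_iff by blast
      then show ?thesis using vec.subspace_0[OF C's] by blast
    next
      case False
      then have "d K \<inter> c (CARD('n) - K) = {0}" using dall[of K] by simp
      moreover have "C' \<subseteq> c (CARD('n) - K)" unfolding C'_def using SK False by (intro cmono) simp_all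
      moreover have "0 \<in> d K \<inter> C'" using vec.subspace_0[OF C's] vec.subspace_0[OF dK(1)] by blast
      ultimately show ?thesis by blast
    qed
    obtain D where D: "vec.subspace D" "vec.dim D = Suc K" "D \<inter> C' = {0}"
      "\<forall>W\<in>B. vec.dim W \<le> Suc K \<longrightarrow> W \<subseteq> D" "\<forall>W\<in>B. Suc K \<le> vec.dim W \<longrightarrow> D \<subseteq> W" "d K \<subseteq> D"
    proof (cases "\<exists>W\<in>B. vec.dim W = Suc K")
      case True
      then obtain W where W: "W \<in> B" "vec.dim W = Suc K" by blast
      show ?thesis
      proof (rule that[of W])
        show "vec.subspace W" using Bsub W(1) by simp
        show "vec.dim W = Suc K" by (rule W(2))
        show "W \<inter> C' = {0}" unfolding C'_def using Bgp[OF W(1)] W(2) by simp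
        show "d K \<subseteq> W" using dK(4) W by simp
        show "\<forall>W'\<in>B. vec.dim W' \<le> Suc K \<longrightarrow> W' \<subseteq> W"
        proof (intro ballI impI)
          fix W' assume W': "W' \<in> B" "vec.dim W' \<le> Suc K"
          show "W' \<subseteq> W"
          proof (cases "vec.dim W' = Suc K")
            case True then show ?thesis using Beq[OF W'(1) W(1)] W(2) by simp
          next
            case False then have "W' \<subseteq> d K" using dK(3) W' by simp
            then show ?thesis using \<open>d K \<subseteq> W\<close> by blast
          qed
        qed
        show "\<forall>W'\<in>B. Suc K \<le> vec.dim W' \<longrightarrow> W \<subseteq> W'"
        proof (intro ballI impI)
          fix W' assume W': "W' \<in> B" "Suc K \<le> vec.dim W'"
          from Bchain[OF W(1) W'(1)] show "W \<subseteq> W'"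
          proof
            assume h: "W' \<subseteq> W"
            have "vec.dim W' \<le> vec.dim W" using vec.dim_subset[OF h] .
            then have "W' = W" using Beq[OF W'(1) W(1)] W(2) W'(2) by simp
            then show ?thesis by simp
          qed
        qed
      qed
    next
      case noW: False
      obtain Y where Y: "vec.subspace Y" "Suc K \<le> vec.dim Y" "d K \<subseteq> Y"
        "Y \<inter> c (CARD('n) - vec.dim Y) = {0}" "\<forall>W\<in>B. Suc K \<le> vec.dim W \<longrightarrow> Y \<subseteq> W"
      proof (cases "\<exists>W\<in>B. Suc K \<le> vec.dim W")
        case True
        define k0 where "k0 = (LEAST k. \<exists>W\<in>B. Suc K \<le> vec.dim W \<and> vec.dim W = k)"
        have ex: "\<exists>k. \<exists>W\<in>B. Suc K \<le> vec.dim W \<and> vec.dim W = k" using True by blast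
        have "\<exists>W\<in>B. Suc K \<le> vec.dim W \<and> vec.dim W = k0"
          unfolding k0_def by (rule LeastI_ex[OF ex])
        then obtain Y where Yb: "Y \<in> B" "Suc K \<le> vec.dim Y" "vec.dim Y = k0" by blast
        have mn: "k0 \<le> vec.dim W" if "W \<in> B" "Suc K \<le> vec.dim W" for W
          unfolding k0_def using that by (intro Least_le) blast
        show ?thesis
        proof (rule that[of Y])
          show "vec.subspace Y" using Bsub Yb(1) by simp
          show "Suc K \<le> vec.dim Y" by (rule Yb(2))
          show "d K \<subseteq> Y" using dK(4) Yb by simp
          show "Y \<inter> c (CARD('n) - vec.dim Y) = {0}" by (rule Bgp[OF Yb(1)])
          show "\<forall>W\<in>B. Suc K \<le> vec.dim W \<longrightarrow> Y \<subseteq> W"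
          proof (intro ballI impI)
            fix W assume W: "W \<in> B" "Suc K \<le> vec.dim W"
            from Bchain[OF Yb(1) W(1)] show "Y \<subseteq> W"
            proof
              assume h: "W \<subseteq> Y"
              have "vec.dim W \<le> vec.dim Y" using vec.dim_subset[OF h] .
              then have "W = Y" using Beq[OF W(1) Yb(1)] mn[OF W] Yb(3) by simp
              then show ?thesis by simp
            qed
          qed
        qed
      next
        case False
        show ?thesis
        proof (rule that[of UNIV])
          show "Suc K \<le> vec.dim (UNIV::(bit^'n) set)" using SK by (simp only: dimN)
          show "(UNIV::(bit^'n) set) \<inter> c (CARD('n) - vec.dim (UNIV::(bit^'n) set)) = {0}"
            by (simp only: dimN diff_self_eq_0 c0) simp
          show "\<forall>W\<in>B. Suc K \<le> vec.dim W \<longrightarrow> UNIV \<subseteq> W" using False by blast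
        qed simp_all
      qed
      define H where "H = vec.span (d K \<union> C')"
      have Hs: "vec.subspace H" unfolding H_def by simp
      have "vec.dim (d K \<inter> C') = 0" using dKC by simp
      then have dH: "vec.dim H = K + vec.dim C'" unfolding H_def using dim_sum[OF dK(1) C's] dK(2) by linarith
      have dYN: "vec.dim Y \<le> CARD('n)" by (rule dim_le_N)
      have nY: "\<not> Y \<subseteq> H"
      proof
        assume YH: "Y \<subseteq> H"
        define cy where "cy = c (CARD('n) - vec.dim Y)"
        have cs: "vec.subspace cy" unfolding cy_def using Y(2) by (intro csub) simp
        have "cy \<subseteq> C'" unfolding cy_def C'_def using Y(2) SK by (intro cmono) simp_all
        moreover have "C' \<subseteq> H" unfolding H_def using vec.span_superset by blast
        ultimately have "Y \<union> cy \<subseteq> H" using YH by blast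
        then have "vec.span (Y \<union> cy) \<subseteq> H" using vec.span_minimal Hs by blast
        then have e1: "vec.dim (vec.span (Y \<union> cy)) \<le> vec.dim H" by (rule vec.dim_subset)
        have "vec.dim (Y \<inter> cy) = 0" using Y(4) unfolding cy_def by simp
        then have e2: "vec.dim (vec.span (Y \<union> cy)) = vec.dim Y + vec.dim cy"
          using dim_sum[OF Y(1) cs] by linarith
        have e3: "vec.dim C' \<le> vec.dim cy + ((CARD('n) - Suc K) - (CARD('n) - vec.dim Y))"
          unfolding C'_def cy_def using Y(2) SK by (intro clip) simp_all
        show False using e1 e2 e3 dH Y(2) dYN by arith
      qed
      then obtain v where v: "v \<in> Y" "v \<notin> H" by blast
      have vdK: "v \<notin> d K" using v(2) unfolding H_def using vec.span_superset by blast
      define D where "D = vec.span (insert v (d K))"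
      show ?thesis
      proof (rule that[of D])
        show "vec.subspace D" unfolding D_def by simp
        show "vec.dim D = Suc K" unfolding D_def using dim_insert_sub[OF dK(1) vdK] dK(2) by simp
        show "d K \<subseteq> D" unfolding D_def using vec.span_superset by blast
        show "D \<inter> C' = {0}"
        proof
          show "D \<inter> C' \<subseteq> {0}"
          proof
            fix z assume z: "z \<in> D \<inter> C'"
            then have "z \<in> d K \<union> (\<lambda>x. v + x) ` d K" unfolding D_def span_insert_sub[OF dK(1)] by blast
            then show "z \<in> {0}"
            proof
              assume "z \<in> d K" then show ?thesis using z dKC by blast
            next
              assume "z \<in> (\<lambda>x. v + x) ` d K"
              then obtain h where h: "h \<in> d K" "z = v + h" by blast
              have "z \<in> H" "h \<in> H" unfolding H_def using z h(1) vec.span_superset by blast+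
              then have "z + h \<in> H" using Hs vec.subspace_add by blast
              then have "v \<in> H" using h(2) by simp
              then show ?thesis using v(2) by blast
            qed
          qed
          show "{0} \<subseteq> D \<inter> C'" using vec.subspace_0[OF C's] \<open>vec.subspace D\<close> vec.subspace_0 by blast
        qed
        show "\<forall>W\<in>B. vec.dim W \<le> Suc K \<longrightarrow> W \<subseteq> D"
        proof (intro ballI impI)
          fix W assume W: "W \<in> B" "vec.dim W \<le> Suc K"
          then have "vec.dim W \<le> K" using noW by (metis le_SucE)
          then have "W \<subseteq> d K" using dK(3) W(1) by simp
          then show "W \<subseteq> D" using \<open>d K \<subseteq> D\<close> by blast
        qed
        show "\<forall>W\<in>B. Suc K \<le> vec.dim W \<longrightarrow> D \<subseteq> W"
        proof (intro ballI impI)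
          fix W assume W: "W \<in> B" "Suc K \<le> vec.dim W"
          have "insert v (d K) \<subseteq> Y" using v(1) Y(3) by blast
          then have "D \<subseteq> Y" unfolding D_def using vec.span_minimal Y(1) by blast
          then show "D \<subseteq> W" using Y(5) W by blast
        qed
      qed
    qed
    define d' where "d' = d(Suc K := D)"
    have part1: "\<forall>k\<le>Suc K. vec.subspace (d' k) \<and> vec.dim (d' k) = k \<and> (0 < k \<longrightarrow> d' k \<inter> c (CARD('n) - k) = {0})
      \<and> (\<forall>W\<in>B. vec.dim W \<le> k \<longrightarrow> W \<subseteq> d' k) \<and> (\<forall>W\<in>B. k \<le> vec.dim W \<longrightarrow> d' k \<subseteq> W)"
    proof (intro allI impI)
      fix k assume k: "k \<le> Suc K"
      show "vec.subspace (d' k) \<and> vec.dim (d' k) = k \<and> (0 < k \<longrightarrow> d' k \<inter> c (CARD('n) - k) = {0})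
      \<and> (\<forall>W\<in>B. vec.dim W \<le> k \<longrightarrow> W \<subseteq> d' k) \<and> (\<forall>W\<in>B. k \<le> vec.dim W \<longrightarrow> d' k \<subseteq> W)"
      proof (cases "k = Suc K")
        case True then show ?thesis using D unfolding d'_def C'_def by simp
      next
        case False then have "k \<le> K" using k by simp
        then show ?thesis using dall[of k] False unfolding d'_def by simp
      qed
    qed
    have part2: "\<forall>j k. j \<le> k \<longrightarrow> k \<le> Suc K \<longrightarrow> d' j \<subseteq> d' k"
    proof (intro allI impI)
      fix j k assume jk: "j \<le> k" "k \<le> Suc K"
      show "d' j \<subseteq> d' k"
      proof (cases "k = Suc K")
        case True
        show ?thesis
        proof (cases "j = Suc K")
          case False then have "j \<le> K" using jk by simp
          then have "d j \<subseteq> d K" using dmono by simp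
          then show ?thesis using D(6) True False unfolding d'_def by auto
        qed (simp add: True)
      next
        case False then have "k \<le> K" "j \<noteq> Suc K" using jk by simp_all
        then show ?thesis using dmono jk False unfolding d'_def by simp
      qed
    qed
    have "P (Suc K) d'" unfolding P_def using part1 part2 by blast
    then show ?case by blast
  qed
  obtain d where d: "P CARD('n) d" using main by blast
  show ?thesis
  proof (intro exI conjI)
    show "\<forall>k\<le>CARD('n). vec.subspace (d k) \<and> vec.dim (d k) = k \<and> (0 < k \<longrightarrow> d k \<inter> c (CARD('n) - k) = {0})"
      using d unfolding P_def by blast
    show "\<forall>j k. j \<le> k \<longrightarrow> k \<le> CARD('n) \<longrightarrow> d j \<subseteq> d k" using d unfolding P_def by blast
    show "\<forall>W\<in>B. d (vec.dim W) = W"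
    proof
      fix W assume W: "W \<in> B"
      then have le: "vec.dim W \<le> CARD('n)" using Bsub by (simp add: less_imp_le)
      have "(\<forall>W'\<in>B. vec.dim W' \<le> vec.dim W \<longrightarrow> W' \<subseteq> d (vec.dim W)) \<and> (\<forall>W'\<in>B. vec.dim W \<le> vec.dim W' \<longrightarrow> d (vec.dim W) \<subseteq> W')"
        using d le unfolding P_def by blast
      then show "d (vec.dim W) = W" using W by blast
    qed
  qed
qed

lemma typeset_eq: "typeset TYPE('n::finite) = {1..CARD('n) - 1}" by (simp add: typeset_def rk_def)

lemma elem_iff2: "is_elem (U::(bit^'n::finite) set) \<longleftrightarrow> vec.subspace U \<and> 1 \<le> vec.dim U \<and> vec.dim U \<le> CARD('n) - 1"
  by (simp add: is_elem_def rk_def)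

lemma chamber_uniq:
  assumes C: "is_chamber (C::(bit^'n::finite) set set)" and U: "U \<in> C" "U' \<in> C" "vec.dim U = vec.dim U'"
  shows "U = U'"
proof -
  have s: "vec.subspace U" "vec.subspace U'" using C U unfolding is_chamber_def is_simplex_def elem_iff2 by blast+
  have "U \<subseteq> U' \<or> U' \<subseteq> U" using C U unfolding is_chamber_def is_simplex_def by blast
  then show ?thesis
  proof
    assume "U \<subseteq> U'" then show ?thesis using subspace_eq[OF s] U(3) by simp
  next
    assume "U' \<subseteq> U" then show ?thesis using subspace_eq[OF s(2,1)] U(3) by simp
  qed
qed

lemma chamber_ex:
  assumes C: "is_chamber (C::(bit^'n::finite) set set)" and k: "1 \<le> k" "k \<le> CARD('n) - 1"
  shows "\<exists>U\<in>C. vec.dim U = k"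
proof -
  have "k \<in> simplex_type C" using C k unfolding is_chamber_def typeset_eq by simp
  then show ?thesis unfolding simplex_type_def elem_type_def by blast
qed

lemma chamber_elem: "is_chamber C \<Longrightarrow> U \<in> C \<Longrightarrow> is_elem U"
  unfolding is_chamber_def is_simplex_def by blast

lemma opp_sym: assumes "opp_chambers C D" shows "opp_chambers D C"
  unfolding opp_chambers_def
proof (intro conjI ballI impI)
  show "is_chamber D" "is_chamber C" using assms unfolding opp_chambers_def by simp_all
next
  fix U W assume "U \<in> D" "W \<in> C" "elem_type U + elem_type W = rk TYPE('a) + 1"
  then have "W \<inter> U = {0}" using assms unfolding opp_chambers_def by (simp add: add.commute)
  then show "U \<inter> W = {0}" by (simp add: Int_commute)
qed

lemma chamber_of_d:
  assumes d1: "\<forall>k\<le>CARD('n). vec.subspace (d k) \<and> vec.dim (d k) = k"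
    and d2: "\<forall>j k. j \<le> k \<longrightarrow> k \<le> CARD('n) \<longrightarrow> d j \<subseteq> d k"
  shows "is_chamber ((d :: nat \<Rightarrow> (bit^'n::finite) set) ` {1..CARD('n) - 1})"
proof -
  have el: "is_elem (d k)" if "k \<in> {1..CARD('n) - 1}" for k
    using d1 that unfolding elem_iff2 by auto
  have cmp: "d j \<subseteq> d k \<or> d k \<subseteq> d j" if "j \<in> {1..CARD('n) - 1}" "k \<in> {1..CARD('n) - 1}" for j k
  proof (cases "j \<le> k")
    case True then show ?thesis using d2 that by auto
  next
    case False then show ?thesis using d2 that by auto
  qed
  have "simplex_type (d ` {1..CARD('n) - 1}) = (\<lambda>k. vec.dim (d k)) ` {1..CARD('n) - 1}"
    unfolding simplex_type_def elem_type_def image_image ..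
  also have "\<dots> = {1..CARD('n) - 1}"
  proof (rule trans[OF image_cong[OF refl] image_ident])
    fix k assume "k \<in> {1..CARD('n) - 1}" then show "vec.dim (d k) = k" using d1 by auto
  qed
  finally show ?thesis unfolding is_chamber_def is_simplex_def typeset_eq using el cmp by blast
qed

lemma OPP:
  assumes C: "is_chamber (C::(bit^'n::finite) set set)" and B: "is_simplex B"
    and gp: "\<forall>W\<in>B. \<forall>U\<in>C. vec.dim U + vec.dim W = CARD('n) \<longrightarrow> U \<inter> W = {0}"
  shows "\<exists>D. is_chamber D \<and> B \<subseteq> D \<and> opp_chambers C D"
proof -
  define c where "c k = (if k = 0 then {0} else (THE U. U \<in> C \<and> vec.dim U = k))" for k
  have cC: "c k \<in> C \<and> vec.dim (c k) = k" if kk: "1 \<le> k" "k \<le> CARD('n) - 1" for k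
  proof -
    have "\<exists>!U. U \<in> C \<and> vec.dim U = k"
    proof -
      obtain U where "U \<in> C" "vec.dim U = k" using chamber_ex[OF C kk] by blast
      moreover have "U' = U" if "U' \<in> C \<and> vec.dim U' = k" for U'
        using chamber_uniq[OF C] that \<open>U \<in> C\<close> \<open>vec.dim U = k\<close> by simp
      ultimately show ?thesis by blast
    qed
    then have "(THE U. U \<in> C \<and> vec.dim U = k) \<in> C \<and> vec.dim (THE U. U \<in> C \<and> vec.dim U = k) = k"
      by (rule theI')
    then show ?thesis unfolding c_def using kk by simp
  qed
  have cdim: "vec.dim (c k) = k" if "k < CARD('n)" for k
    using cC[of k] that by (cases "k = 0") (simp_all add: c_def)
  have csub: "vec.subspace (c k)" if "k < CARD('n)" for k
  proof (cases "k = 0")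
    case True then show ?thesis by (simp add: c_def)
  next
    case False
    then have "c k \<in> C" using cC[of k] that by simp
    then have "is_elem (c k)" by (rule chamber_elem[OF C])
    then show ?thesis by (simp add: elem_iff2)
  qed
  have cmono: "c j \<subseteq> c k" if "j \<le> k" "k < CARD('n)" for j k
  proof (cases "j = 0")
    case True
    have "0 \<in> c k" using vec.subspace_0[OF csub[OF that(2)]] .
    then show ?thesis using True by (simp add: c_def)
  next
    case False
    have j: "c j \<in> C" "vec.dim (c j) = j" using cC[of j] False that by simp_all
    have k: "c k \<in> C" "vec.dim (c k) = k" using cC[of k] False that by simp_all
    have "c j \<subseteq> c k \<or> c k \<subseteq> c j" using C j(1) k(1) unfolding is_chamber_def is_simplex_def by blast
    then show ?thesis
    proof
      assume h: "c k \<subseteq> c j"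
      have "k \<le> j" using vec.dim_subset[OF h] j(2) k(2) by simp
      then show ?thesis using that by simp
    qed
  qed
  have clip: "vec.dim (c k) \<le> vec.dim (c j) + (k - j)" if "j \<le> k" "k < CARD('n)" for j k
    using cdim that by simp
  have Bsub: "vec.subspace W \<and> 1 \<le> vec.dim W \<and> vec.dim W < CARD('n)" if "W \<in> B" for W
    using B that unfolding is_simplex_def elem_iff2 by fastforce
  have Bchain: "W \<subseteq> W' \<or> W' \<subseteq> W" if "W \<in> B" "W' \<in> B" for W W'
    using B that unfolding is_simplex_def by blast
  have Bgp: "W \<inter> c (CARD('n) - vec.dim W) = {0}" if "W \<in> B" for W
  proof -
    have b: "1 \<le> vec.dim W" "vec.dim W < CARD('n)" using Bsub[OF that] by simp_all
    have "c (CARD('n) - vec.dim W) \<in> C \<and> vec.dim (c (CARD('n) - vec.dim W)) = CARD('n) - vec.dim W"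
      using b by (intro cC) simp_all
    then have "c (CARD('n) - vec.dim W) \<inter> W = {0}" using gp that b by simp
    then show ?thesis by blast
  qed
  obtain d where d1: "\<forall>k\<le>CARD('n). vec.subspace (d k) \<and> vec.dim (d k) = k \<and> (0 < k \<longrightarrow> d k \<inter> c (CARD('n) - k) = {0})"
    and d2: "\<forall>j k. j \<le> k \<longrightarrow> k \<le> CARD('n) \<longrightarrow> d j \<subseteq> d k" and d3: "\<forall>W\<in>B. d (vec.dim W) = W"
    using cons_flag[of c B, OF _ csub cmono clip Bsub Bchain Bgp] by (auto simp: c_def)
  define D where "D = d ` {1..CARD('n) - 1}"
  have Dc: "is_chamber D" unfolding D_def by (rule chamber_of_d) (use d1 d2 in auto)
  have BD: "B \<subseteq> D"
  proof
    fix W assume W: "W \<in> B"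
    then have "vec.dim W \<in> {1..CARD('n) - 1}" using Bsub by fastforce
    then show "W \<in> D" unfolding D_def using d3 W by (metis image_eqI)
  qed
  have "opp_chambers C D" unfolding opp_chambers_def
  proof (intro conjI C Dc ballI impI)
    fix U W assume U: "U \<in> C" and W: "W \<in> D" and t: "elem_type U + elem_type W = rk TYPE('n) + 1"
    obtain k where k: "k \<in> {1..CARD('n) - 1}" "W = d k" using W unfolding D_def by blast
    have kN: "k \<le> CARD('n)" "0 < k" using k(1) by auto
    have "vec.subspace (d k) \<and> vec.dim (d k) = k \<and> (0 < k \<longrightarrow> d k \<inter> c (CARD('n) - k) = {0})"
      using d1 kN(1) by blast
    then have dk: "vec.dim (d k) = k" "d k \<inter> c (CARD('n) - k) = {0}" using kN(2) by simp_all
    have N: "rk TYPE('n) + 1 = CARD('n)" by (simp add: rk_def)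
    have dU: "vec.dim U = CARD('n) - k" using t N k dk(1) unfolding elem_type_def by simp
    have "c (CARD('n) - k) \<in> C \<and> vec.dim (c (CARD('n) - k)) = CARD('n) - k" using k(1) by (intro cC) auto
    then have "U = c (CARD('n) - k)" using chamber_uniq[OF C U] dU by simp
    then show "U \<inter> W = {0}" using dk(2) k(2) by blast
  qed
  then show ?thesis using Dc BD by blast
qed

lemma EXT0:
  assumes A: "is_simplex (A::(bit^'n::finite) set set)"
  shows "\<exists>D. is_chamber D \<and> A \<subseteq> D"
proof -
  have Bsub: "vec.subspace W \<and> 1 \<le> vec.dim W \<and> vec.dim W < CARD('n)" if "W \<in> A" for W
    using A that unfolding is_simplex_def elem_iff2 by fastforce
  have Bchain: "W \<subseteq> W' \<or> W' \<subseteq> W" if "W \<in> A" "W' \<in> A" for W W'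
    using A that unfolding is_simplex_def by blast
  have Bgp: "W \<inter> (\<lambda>k. {0}) (CARD('n) - vec.dim W) = {0}" if "W \<in> A" for W
    using Bsub[OF that] vec.subspace_0 by auto
  obtain d where d1: "\<forall>k\<le>CARD('n). vec.subspace (d k) \<and> vec.dim (d k) = k \<and> (0 < k \<longrightarrow> d k \<inter> (\<lambda>k. {0}) (CARD('n) - k) = {0})"
    and d2: "\<forall>j k. j \<le> k \<longrightarrow> k \<le> CARD('n) \<longrightarrow> d j \<subseteq> d k" and d3: "\<forall>W\<in>A. d (vec.dim W) = W"
    using cons_flag[of "\<lambda>k. {0}" A, OF _ _ _ _ Bsub Bchain Bgp] by auto
  have Dc: "is_chamber (d ` {1..CARD('n) - 1})" by (rule chamber_of_d) (use d1 d2 in auto)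
  have "A \<subseteq> d ` {1..CARD('n) - 1}"
  proof
    fix W assume W: "W \<in> A"
    then have "vec.dim W \<in> {1..CARD('n) - 1}" using Bsub by fastforce
    then show "W \<in> d ` {1..CARD('n) - 1}" using d3 W by (metis image_eqI)
  qed
  then show ?thesis using Dc by blast
qed

locale dual =
  fixes th :: "(bit^'n::finite) set \<Rightarrow> (bit^'n) set"
  assumes N3: "CARD('n) \<ge> 3" and dua: "is_duality th"
begin

lemma elem_iff: "is_elem (U::(bit^'n) set) \<longleftrightarrow> vec.subspace U \<and> 1 \<le> vec.dim U \<and> vec.dim U \<le> CARD('n) - 1"
  by (simp add: is_elem_def rk_def)

lemma bij: "bij_betw th {U. is_elem U} {U. is_elem U}"
  using dua by (simp add: is_duality_def)

lemma th_elem: "is_elem U \<Longrightarrow> is_elem (th U)"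
  using bij by (auto dest: bij_betw_apply)

lemma th_dim: "is_elem U \<Longrightarrow> vec.dim (th U) = CARD('n) - vec.dim U"
  using dua N3 by (simp add: is_duality_def elem_type_def rk_def)

lemma th_inj: "is_elem U \<Longrightarrow> is_elem W \<Longrightarrow> th U = th W \<Longrightarrow> U = W"
  using bij by (auto simp: bij_betw_def inj_on_def)

lemma th_comp: "is_elem U \<Longrightarrow> is_elem W \<Longrightarrow> (U \<subseteq> W \<or> W \<subseteq> U) \<longleftrightarrow> (th U \<subseteq> th W \<or> th W \<subseteq> th U)"
  using dua by (simp add: is_duality_def)

lemma th_anti: assumes "is_elem U" "is_elem W" "U \<subseteq> W" shows "th W \<subseteq> th U"
proof -
  have "th U \<subseteq> th W \<or> th W \<subseteq> th U" using th_comp assms by blast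
  moreover
  { assume h: "th U \<subseteq> th W"
    have "vec.dim (th U) \<le> vec.dim (th W)" using h vec.dim_subset by blast
    moreover have "vec.dim U \<le> vec.dim W" using assms vec.dim_subset by blast
    ultimately have "vec.dim W \<le> vec.dim U" using assms th_dim elem_iff by auto
    then have "U = W" using subspace_eq assms elem_iff by blast
    then have "th W \<subseteq> th U" by simp }
  ultimately show ?thesis by blast
qed

lemma th_anti_rev: assumes "is_elem U" "is_elem W" "th W \<subseteq> th U" shows "U \<subseteq> W"
proof -
  have "U \<subseteq> W \<or> W \<subseteq> U" using th_comp assms by blast
  moreover
  { assume h: "W \<subseteq> U"
    then have "th U \<subseteq> th W" using th_anti assms by blast
    then have "U = W" using assms th_inj by blast }
  ultimately show ?thesis by blast
qed

lemma point_elem: assumes "(a::bit^'n) \<noteq> 0" shows "is_elem (vec.span {a})"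
proof -
  have "vec.dim (vec.span {a}) = 1" using assms by (simp add: vec.dim_span)
  then show ?thesis using N3 unfolding elem_iff by auto
qed

definition psi where "psi = inv_into {U. is_elem U} th"

lemma psi_elem: "is_elem W \<Longrightarrow> is_elem (psi W)"
  unfolding psi_def using bij_betw_apply[OF bij_betw_inv_into[OF bij]] by simp

lemma th_psi: "is_elem W \<Longrightarrow> th (psi W) = W"
  unfolding psi_def using bij_betw_inv_into_right[OF bij] by simp

lemma psi_th: "is_elem U \<Longrightarrow> psi (th U) = U"
  unfolding psi_def using bij_betw_inv_into_left[OF bij] by simp

lemma psi_dim: "is_elem W \<Longrightarrow> vec.dim (psi W) = CARD('n) - vec.dim W"
proof -
  assume a: "is_elem W"
  have e: "vec.dim (th (psi W)) = CARD('n) - vec.dim (psi W)" by (rule th_dim[OF psi_elem[OF a]])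
  then have "vec.dim W = CARD('n) - vec.dim (psi W)" unfolding th_psi[OF a] .
  moreover have "vec.dim (psi W) \<le> CARD('n)" by (rule dim_le_N)
  ultimately show ?thesis by arith
qed

definition beta :: "bit^'n \<Rightarrow> bit^'n \<Rightarrow> bit" where
  "beta x y = (if x = 0 \<or> y \<in> th (vec.span {x}) then 0 else 1)"


lemma dim_th_point: "(x::bit^'n) \<noteq> 0 \<Longrightarrow> vec.subspace (th (vec.span {x})) \<and> vec.dim (th (vec.span {x})) = CARD('n) - 1"
  using th_elem[OF point_elem] th_dim[OF point_elem] elem_iff by simp

lemma dim_psi_point: "(y::bit^'n) \<noteq> 0 \<Longrightarrow> vec.subspace (psi (vec.span {y})) \<and> vec.dim (psi (vec.span {y})) = CARD('n) - 1"
  using psi_elem[OF point_elem] psi_dim[OF point_elem] elem_iff by simp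

lemma psi_anti: assumes "is_elem A" "is_elem B" "A \<subseteq> B" shows "psi B \<subseteq> psi A"
  using th_anti_rev[OF psi_elem[OF assms(2)] psi_elem[OF assms(1)]] th_psi assms by simp

lemma psi_anti_rev: assumes "is_elem A" "is_elem B" "psi B \<subseteq> psi A" shows "A \<subseteq> B"
  using th_anti[OF psi_elem[OF assms(2)] psi_elem[OF assms(1)] assms(3)] th_psi assms by simp

lemma elem_sub: "is_elem (U::(bit^'n) set) \<Longrightarrow> vec.subspace U" by (simp add: elem_iff)
lemma elem_0: "is_elem (U::(bit^'n) set) \<Longrightarrow> 0 \<in> U" by (simp add: elem_iff vec.subspace_0)

lemma beta_ind1: "x \<noteq> 0 \<Longrightarrow> beta x y = ind (th (vec.span {x})) y"
  by (simp add: beta_def ind_def)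

lemma span_single_sub: "vec.subspace S \<Longrightarrow> (x::bit^'n) \<in> S \<Longrightarrow> vec.span {x} \<subseteq> S"
  by (simp add: vec.span_minimal)

lemma in_span_single: "(x::bit^'n) \<in> vec.span {x}"
  by (simp add: span_single)

lemma beta_ind2: assumes "y \<noteq> 0" shows "beta x y = ind (psi (vec.span {y})) x"
proof (cases "x = 0")
  case True
  then have "x \<in> psi (vec.span {y})" using elem_0[OF psi_elem[OF point_elem[OF assms]]] by simp
  then show ?thesis using True by (simp add: beta_def ind_def)
next
  case False
  have py: "is_elem (vec.span {y})" "is_elem (vec.span {x})" using point_elem assms False by auto
  have "y \<in> th (vec.span {x}) \<longleftrightarrow> x \<in> psi (vec.span {y})"
  proof
    assume h: "y \<in> th (vec.span {x})"
    have "vec.span {y} \<subseteq> th (vec.span {x})" using span_single_sub[OF conjunct1[OF dim_th_point[OF False]] h] .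
    then have "th (psi (vec.span {y})) \<subseteq> th (vec.span {x})" using th_psi py by simp
    then have "vec.span {x} \<subseteq> psi (vec.span {y})" using th_anti_rev psi_elem py by blast
    then show "x \<in> psi (vec.span {y})" using in_span_single by blast
  next
    assume h: "x \<in> psi (vec.span {y})"
    have "vec.span {x} \<subseteq> psi (vec.span {y})" using span_single_sub[OF conjunct1[OF dim_psi_point[OF assms]] h] .
    then have "th (psi (vec.span {y})) \<subseteq> th (vec.span {x})" using th_anti psi_elem py by blast
    then have "vec.span {y} \<subseteq> th (vec.span {x})" using th_psi py by simp
    then show "y \<in> th (vec.span {x})" using in_span_single by blast
  qed
  then show ?thesis using False by (simp add: beta_def ind_def)
qed

lemma beta_0 [simp]: "beta 0 y = 0" "beta x 0 = 0"
proof -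
  show "beta 0 y = 0" by (simp add: beta_def)
  show "beta x 0 = 0"
  proof (cases "x = 0")
    case False
    have "vec.subspace (th (vec.span {x}))" using dim_th_point[OF False] by simp
    then have "0 \<in> th (vec.span {x})" by (rule vec.subspace_0)
    then show ?thesis by (simp add: beta_def)
  qed (simp add: beta_def)
qed

lemma beta_add_right: "beta x (y + z) = beta x y + beta x z"
proof (cases "x = 0")
  case False
  have "ind (th (vec.span {x})) (y + z) = ind (th (vec.span {x})) y + ind (th (vec.span {x})) z"
    using dim_th_point[OF False] by (intro ind_add) simp_all
  then show ?thesis by (simp only: beta_ind1[OF False])
qed simp

lemma beta_add_left: "beta (x + w) y = beta x y + beta w y"
proof (cases "y = 0")
  case False
  have "ind (psi (vec.span {y})) (x + w) = ind (psi (vec.span {y})) x + ind (psi (vec.span {y})) w"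
    using dim_psi_point[OF False] by (intro ind_add) simp_all
  then show ?thesis by (simp only: beta_ind2[OF False])
qed simp

lemma beta_cases: "beta x y = 0 \<or> beta x y = 1" by (rule bit_cases2)

definition perp :: "(bit^'n) set \<Rightarrow> (bit^'n) set" where "perp S = {y. \<forall>x\<in>S. beta x y = 0}"
definition lperp :: "(bit^'n) set \<Rightarrow> (bit^'n) set" where "lperp S = {x. \<forall>y\<in>S. beta x y = 0}"

lemma perp_subspace: "vec.subspace (perp S)"
  unfolding subspace_bit perp_def by (simp add: beta_add_right)

lemma lperp_subspace: "vec.subspace (lperp S)"
  unfolding subspace_bit lperp_def by (simp add: beta_add_left)

lemma perp_mono: "S \<subseteq> T \<Longrightarrow> perp T \<subseteq> perp S"
  unfolding perp_def by blast

lemma lperp_mono: "S \<subseteq> T \<Longrightarrow> lperp T \<subseteq> lperp S"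
  unfolding lperp_def by blast

lemma perp_Un: "perp (S \<union> T) = perp S \<inter> perp T"
  unfolding perp_def by blast

lemma lperp_Un: "lperp (S \<union> T) = lperp S \<inter> lperp T"
  unfolding lperp_def by blast

lemma perp_span: "perp (vec.span S) = perp S"
proof
  show "perp (vec.span S) \<subseteq> perp S" by (rule perp_mono[OF vec.span_superset])
  show "perp S \<subseteq> perp (vec.span S)"
  proof
    fix y assume y: "y \<in> perp S"
    have sub: "vec.subspace {x. beta x y = 0}" unfolding subspace_bit by (simp add: beta_add_left)
    have "S \<subseteq> {x. beta x y = 0}" using y by (auto simp: perp_def)
    then have "vec.span S \<subseteq> {x. beta x y = 0}" using vec.span_minimal sub by blast
    then show "y \<in> perp (vec.span S)" by (auto simp: perp_def)
  qed
qed

lemma lperp_span: "lperp (vec.span S) = lperp S"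
proof
  show "lperp (vec.span S) \<subseteq> lperp S" by (rule lperp_mono[OF vec.span_superset])
  show "lperp S \<subseteq> lperp (vec.span S)"
  proof
    fix x assume x: "x \<in> lperp S"
    have sub: "vec.subspace {y. beta x y = 0}" unfolding subspace_bit by (simp add: beta_add_right)
    have "S \<subseteq> {y. beta x y = 0}" using x by (auto simp: lperp_def)
    then have "vec.span S \<subseteq> {y. beta x y = 0}" using vec.span_minimal sub by blast
    then show "x \<in> lperp (vec.span S)" by (auto simp: lperp_def)
  qed
qed

lemma elem_nonzero: assumes "is_elem (U::(bit^'n) set)" obtains x where "x \<in> U" "x \<noteq> 0"
proof -
  have "U \<noteq> {0}"
  proof
    assume "U = {0}"
    then have "vec.dim U = 0" using dim0_iff[OF elem_sub[OF assms]] by (simp only:)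
    moreover have "1 \<le> vec.dim U" using assms by (simp add: elem_iff)
    ultimately show False by linarith
  qed
  moreover have "0 \<in> U" using elem_0[OF assms] .
  ultimately show ?thesis using that by blast
qed

lemma th_perp: assumes U: "is_elem U" shows "th U = perp U"
proof
  show "th U \<subseteq> perp U"
  proof
    fix y assume y: "y \<in> th U"
    have "beta x y = 0" if x: "x \<in> U" for x
    proof (cases "x = 0")
      case False
      have "vec.span {x} \<subseteq> U" using span_single_sub[OF elem_sub[OF U] x] .
      then have "th U \<subseteq> th (vec.span {x})" using th_anti point_elem[OF False] U by blast
      then show ?thesis using y False by (simp add: beta_def subset_iff)
    qed simp
    then show "y \<in> perp U" by (simp add: perp_def)
  qed
  then have thsub: "th U \<subseteq> perp U" .
  obtain x where x: "x \<in> U" "x \<noteq> 0" using elem_nonzero[OF U] by blast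
  have Ix: "perp U \<subseteq> th (vec.span {x})"
  proof
    fix y assume "y \<in> perp U" then have "beta x y = 0" using x by (simp add: perp_def)
    then show "y \<in> th (vec.span {x})" using x by (simp add: beta_def split: if_splits)
  qed
  have d1: "vec.dim (perp U) \<le> CARD('n) - 1" using vec.dim_subset[OF Ix] dim_th_point[OF x(2)] by simp
  have d2: "1 \<le> vec.dim (perp U)"
  proof -
    have "vec.dim (th U) \<le> vec.dim (perp U)" using vec.dim_subset[OF thsub] .
    moreover have "1 \<le> vec.dim (th U)" using th_elem[OF U] elem_iff by simp
    ultimately show ?thesis by simp
  qed
  have I: "is_elem (perp U)" using d1 d2 perp_subspace elem_iff by simp
  define Z where "Z = psi (perp U)"
  have Z: "is_elem Z" "th Z = perp U" using psi_elem[OF I] th_psi[OF I] by (simp_all add: Z_def)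
  have "U \<subseteq> Z"
  proof
    fix u assume u: "u \<in> U"
    show "u \<in> Z"
    proof (cases "u = 0")
      case True then show ?thesis using elem_0[OF Z(1)] by simp
    next
      case False
      have "perp U \<subseteq> th (vec.span {u})"
      proof
        fix y assume "y \<in> perp U" then have "beta u y = 0" using u by (simp add: perp_def)
        then show "y \<in> th (vec.span {u})" using False by (simp add: beta_def split: if_splits)
      qed
      then have "th Z \<subseteq> th (vec.span {u})" using Z by simp
      then have "vec.span {u} \<subseteq> Z" using th_anti_rev point_elem[OF False] Z(1) by blast
      then show ?thesis using in_span_single by blast
    qed
  qed
  then have "th Z \<subseteq> th U" using th_anti U Z(1) by blast
  then show "perp U \<subseteq> th U" using Z by simp
qed

lemma psi_lperp: assumes U: "is_elem U" shows "psi U = lperp U"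
proof
  show "psi U \<subseteq> lperp U"
  proof
    fix x assume x: "x \<in> psi U"
    have "beta x y = 0" if y: "y \<in> U" for y
    proof (cases "y = 0")
      case False
      have "vec.span {y} \<subseteq> U" using span_single_sub[OF elem_sub[OF U] y] .
      then have "psi U \<subseteq> psi (vec.span {y})" using psi_anti point_elem[OF False] U by blast
      then show ?thesis using x beta_ind2[OF False] by (simp add: ind_def subset_iff)
    qed simp
    then show "x \<in> lperp U" by (simp add: lperp_def)
  qed
  then have thsub: "psi U \<subseteq> lperp U" .
  obtain y where y: "y \<in> U" "y \<noteq> 0" using elem_nonzero[OF U] by blast
  have Ix: "lperp U \<subseteq> psi (vec.span {y})"
  proof
    fix x assume "x \<in> lperp U" then have "beta x y = 0" using y by (simp add: lperp_def)
    then show "x \<in> psi (vec.span {y})" using beta_ind2[OF y(2)] by (simp add: ind_def split: if_splits)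
  qed
  have d1: "vec.dim (lperp U) \<le> CARD('n) - 1" using vec.dim_subset[OF Ix] dim_psi_point[OF y(2)] by simp
  have d2: "1 \<le> vec.dim (lperp U)"
  proof -
    have "vec.dim (psi U) \<le> vec.dim (lperp U)" using vec.dim_subset[OF thsub] .
    moreover have "1 \<le> vec.dim (psi U)" using psi_elem[OF U] elem_iff by simp
    ultimately show ?thesis by simp
  qed
  have I: "is_elem (lperp U)" using d1 d2 lperp_subspace elem_iff by simp
  define Z where "Z = th (lperp U)"
  have Z: "is_elem Z" "psi Z = lperp U" using th_elem[OF I] psi_th[OF I] by (simp_all add: Z_def)
  have "U \<subseteq> Z"
  proof
    fix u assume u: "u \<in> U"
    show "u \<in> Z"
    proof (cases "u = 0")
      case True then show ?thesis using elem_0[OF Z(1)] by simp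
    next
      case False
      have "lperp U \<subseteq> psi (vec.span {u})"
      proof
        fix x assume "x \<in> lperp U" then have "beta x u = 0" using u by (simp add: lperp_def)
        then show "x \<in> psi (vec.span {u})" using beta_ind2[OF False] by (simp add: ind_def split: if_splits)
      qed
      then have "psi Z \<subseteq> psi (vec.span {u})" using Z by simp
      then have "vec.span {u} \<subseteq> Z" using psi_anti_rev point_elem[OF False] Z(1) by blast
      then show ?thesis using in_span_single by blast
    qed
  qed
  then have "psi Z \<subseteq> psi U" using psi_anti U Z(1) by blast
  then show "lperp U \<subseteq> psi U" using Z by simp
qed


lemma dim_zero_set: "vec.dim {0::bit^'n} = 0" by simp

lemma perp_zero: "perp {0} = UNIV" by (simp add: perp_def)
lemma lperp_zero: "lperp {0} = UNIV" by (simp add: lperp_def)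

lemma N_gt: "CARD('n) - 1 < CARD('n)" using N3 by simp

lemma perp_UNIV: "perp UNIV = {0}"
proof
  show "perp UNIV \<subseteq> {0}"
  proof
    fix y assume y: "y \<in> perp UNIV"
    show "y \<in> {0}"
    proof (rule ccontr)
      assume "y \<notin> {0}" then have y0: "y \<noteq> 0" by simp
      have "\<forall>x. x \<in> psi (vec.span {y})"
      proof
        fix x have "beta x y = 0" using y by (simp add: perp_def)
        then show "x \<in> psi (vec.span {y})" using beta_ind2[OF y0] by (simp add: ind_def split: if_splits)
      qed
      then have "psi (vec.span {y}) = UNIV" by blast
      then have "vec.dim (psi (vec.span {y})) = CARD('n)" by (simp only: dimN)
      then show False using dim_psi_point[OF y0] N_gt by simp
    qed
  qed
  show "{0} \<subseteq> perp UNIV" by (simp add: perp_def)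
qed

lemma lperp_UNIV: "lperp UNIV = {0}"
proof
  show "lperp UNIV \<subseteq> {0}"
  proof
    fix y assume y: "y \<in> lperp UNIV"
    show "y \<in> {0}"
    proof (rule ccontr)
      assume "y \<notin> {0}" then have y0: "y \<noteq> 0" by simp
      have "\<forall>x. x \<in> th (vec.span {y})"
      proof
        fix x have "beta y x = 0" using y by (simp add: lperp_def)
        then show "x \<in> th (vec.span {y})" using beta_ind1[OF y0] by (simp add: ind_def split: if_splits)
      qed
      then have "th (vec.span {y}) = UNIV" by blast
      then have "vec.dim (th (vec.span {y})) = CARD('n)" by (simp only: dimN)
      then show False using dim_th_point[OF y0] N_gt by simp
    qed
  qed
  show "{0} \<subseteq> lperp UNIV" by (simp add: lperp_def)
qed

lemma perp_dim: assumes S: "vec.subspace S" shows "vec.dim (perp S) = CARD('n) - vec.dim S"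
proof -
  have le: "vec.dim S \<le> CARD('n)" by (rule dim_le_N)
  consider "vec.dim S = 0" | "vec.dim S = CARD('n)" | "1 \<le> vec.dim S \<and> vec.dim S \<le> CARD('n) - 1"
    using le by linarith
  then show ?thesis
  proof cases
    case 1
    then have "S = {0}" using dim0_iff[OF S] by (simp only:)
    then have "perp S = UNIV" by (simp only: perp_zero)
    then have "vec.dim (perp S) = CARD('n)" by (simp only: dimN)
    then show ?thesis using 1 by linarith
  next
    case 2
    then have "S = UNIV" using dimN_eq[OF S] by simp
    then have "perp S = {0}" by (simp only: perp_UNIV)
    then have "vec.dim (perp S) = 0" by (simp only: dim_zero_set)
    then show ?thesis using 2 by linarith
  next
    case 3
    then have "is_elem S" using S by (simp add: elem_iff)
    then show ?thesis using th_perp th_dim by simp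
  qed
qed

lemma lperp_dim: assumes S: "vec.subspace S" shows "vec.dim (lperp S) = CARD('n) - vec.dim S"
proof -
  have le: "vec.dim S \<le> CARD('n)" by (rule dim_le_N)
  consider "vec.dim S = 0" | "vec.dim S = CARD('n)" | "1 \<le> vec.dim S \<and> vec.dim S \<le> CARD('n) - 1"
    using le by linarith
  then show ?thesis
  proof cases
    case 1
    then have "S = {0}" using dim0_iff[OF S] by (simp only:)
    then have "lperp S = UNIV" by (simp only: lperp_zero)
    then have "vec.dim (lperp S) = CARD('n)" by (simp only: dimN)
    then show ?thesis using 1 by linarith
  next
    case 2
    then have "S = UNIV" using dimN_eq[OF S] by simp
    then have "lperp S = {0}" by (simp only: lperp_UNIV)
    then have "vec.dim (lperp S) = 0" by (simp only: dim_zero_set)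
    then show ?thesis using 2 by linarith
  next
    case 3
    then have "is_elem S" using S by (simp add: elem_iff)
    then show ?thesis using psi_lperp psi_dim by simp
  qed
qed

lemma perp_lperp: assumes S: "vec.subspace S" shows "perp (lperp S) = S"
proof -
  have sub: "S \<subseteq> perp (lperp S)" by (auto simp: perp_def lperp_def)
  have "vec.dim (perp (lperp S)) = vec.dim S"
    using perp_dim[OF lperp_subspace] lperp_dim[OF S] dim_le_N[of S] by simp
  then show ?thesis using subspace_eq[OF S perp_subspace sub] by simp
qed

lemma lperp_perp: assumes S: "vec.subspace S" shows "lperp (perp S) = S"
proof -
  have sub: "S \<subseteq> lperp (perp S)" by (auto simp: perp_def lperp_def)
  have "vec.dim (lperp (perp S)) = vec.dim S"
    using lperp_dim[OF perp_subspace] perp_dim[OF S] dim_le_N[of S] by simp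
  then show ?thesis using subspace_eq[OF S lperp_subspace sub] by simp
qed

lemma lperp_eq0: assumes S: "vec.subspace S" "lperp S = {0}" shows "S = UNIV"
proof -
  have "vec.dim (lperp S) = 0" using assms(2) by (simp only: dim_zero_set)
  then have "vec.dim S = CARD('n)" using lperp_dim[OF S(1)] dim_le_N[of S] by simp
  then show ?thesis using dimN_eq[OF S(1)] by simp
qed

definition good :: "(bit^'n) set \<Rightarrow> bool" where "good S \<longleftrightarrow> S \<inter> perp S = {0}"

lemma good_lgood: assumes S: "vec.subspace S" and g: "good S" shows "S \<inter> lperp S = {0}"
proof -
  have "vec.dim (S \<inter> perp S) = 0" using g by (simp add: good_def)
  then have "vec.dim (vec.span (S \<union> perp S)) = CARD('n)"
    using dim_sum[OF S perp_subspace[of S]] perp_dim[OF S] dim_le_N[of S] by arith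
  then have sp: "vec.span (S \<union> perp S) = UNIV" using dimN_eq[OF vec.subspace_span] by blast
  have "lperp (vec.span (S \<union> perp S)) = lperp S \<inter> S"
    by (simp only: lperp_span lperp_Un lperp_perp[OF S])
  then have "lperp S \<inter> S = {0}" using sp lperp_UNIV by simp
  then show ?thesis by blast
qed

lemma UB:
  assumes W: "vec.subspace W" "good W" and Y: "vec.subspace Y" "Y \<subseteq> W"
  shows "vec.dim (W \<inter> perp Y) + vec.dim Y = vec.dim W"
proof -
  have "lperp (vec.span (W \<union> perp Y)) = lperp W \<inter> Y"
    by (simp only: lperp_span lperp_Un lperp_perp[OF Y(1)])
  also have "\<dots> \<subseteq> W \<inter> lperp W" using Y(2) by blast
  also have "\<dots> = {0}" by (rule good_lgood[OF W])
  finally have "lperp (vec.span (W \<union> perp Y)) \<subseteq> {0}" .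
  moreover have "0 \<in> lperp (vec.span (W \<union> perp Y))" by (simp add: lperp_def)
  ultimately have "lperp (vec.span (W \<union> perp Y)) = {0}" by blast
  then have "vec.span (W \<union> perp Y) = UNIV" using lperp_eq0[OF vec.subspace_span] by blast
  then have e2: "vec.dim (vec.span (W \<union> perp Y)) = CARD('n)" by (simp only: dimN)
  have e1: "vec.dim (vec.span (W \<union> perp Y)) + vec.dim (W \<inter> perp Y) = vec.dim W + vec.dim (perp Y)"
    by (rule dim_sum[OF W(1) perp_subspace[of Y]])
  show ?thesis using e1 e2 perp_dim[OF Y(1)] dim_le_N[of Y] by arith
qed

lemma good_comp:
  assumes W: "vec.subspace W" "good W" and Y: "vec.subspace Y" "good Y" "Y \<subseteq> W"
  shows "good (W \<inter> perp Y) \<and> vec.span (Y \<union> (W \<inter> perp Y)) = W \<and> vec.dim (W \<inter> perp Y) + vec.dim Y = vec.dim W"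
proof -
  define Z where "Z = W \<inter> perp Y"
  have Zs: "vec.subspace Z" unfolding Z_def using W(1) perp_subspace by (rule vec.subspace_inter)
  have ub: "vec.dim Z + vec.dim Y = vec.dim W" unfolding Z_def using UB[OF W Y(1,3)] .
  have "Y \<inter> Z \<subseteq> Y \<inter> perp Y" unfolding Z_def by blast
  then have "Y \<inter> Z \<subseteq> {0}" using Y(2) unfolding good_def by blast
  then have "vec.dim (Y \<inter> Z) = 0" by simp
  then have d: "vec.dim (vec.span (Y \<union> Z)) = vec.dim W" using dim_sum[OF Y(1) Zs] ub by linarith
  have "Y \<union> Z \<subseteq> W" unfolding Z_def using Y(3) by blast
  then have "vec.span (Y \<union> Z) \<subseteq> W" using vec.span_minimal W(1) by blast
  then have sp: "vec.span (Y \<union> Z) = W" using subspace_eq[OF vec.subspace_span W(1)] d by simp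
  have "Z \<inter> perp Z \<subseteq> {0}"
  proof
    fix z assume z: "z \<in> Z \<inter> perp Z"
    then have "z \<in> perp Y \<inter> perp Z" unfolding Z_def by blast
    then have "z \<in> perp (vec.span (Y \<union> Z))" by (simp only: perp_span perp_Un)
    then have "z \<in> perp W" using sp by (simp only:)
    moreover have "z \<in> W" using z unfolding Z_def by blast
    ultimately have "z \<in> W \<inter> perp W" by blast
    then show "z \<in> {0}" using W(2) unfolding good_def by blast
  qed
  moreover have "0 \<in> Z \<inter> perp Z" using vec.subspace_0[OF Zs] by (simp add: perp_def)
  ultimately have "good Z" unfolding good_def by blast
  then show ?thesis using sp ub unfolding Z_def by simp
qed

lemma good_sum:
  assumes U: "vec.subspace U" "good U" and X: "vec.subspace X" "good X" "X \<subseteq> perp U"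
  shows "good (vec.span (U \<union> X)) \<and> vec.dim (vec.span (U \<union> X)) = vec.dim U + vec.dim X"
proof -
  have "U \<inter> X \<subseteq> U \<inter> perp U" using X(3) by blast
  then have "U \<inter> X \<subseteq> {0}" using U(2) unfolding good_def by blast
  then have "vec.dim (U \<inter> X) = 0" by simp
  then have d: "vec.dim (vec.span (U \<union> X)) = vec.dim U + vec.dim X" using dim_sum[OF U(1) X(1)] by linarith
  have spU: "vec.span U = U" and spX: "vec.span X = X" using U(1) X(1) by simp_all
  have "vec.span (U \<union> X) \<inter> perp (vec.span (U \<union> X)) \<subseteq> {0}"
  proof
    fix z assume z: "z \<in> vec.span (U \<union> X) \<inter> perp (vec.span (U \<union> X))"
    then have zp: "z \<in> perp U" "z \<in> perp X" by (simp_all add: perp_span perp_Un)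
    from z have "z \<in> vec.span (U \<union> X)" by blast
    then obtain u x where ux: "z = u + x" "u \<in> U" "x \<in> X"
      unfolding vec.span_Un spU spX by blast
    have "u \<in> perp U"
      unfolding perp_def
    proof (intro CollectI ballI)
      fix u' assume u': "u' \<in> U"
      have "beta u' z = 0" using zp(1) u' by (simp add: perp_def)
      moreover have "beta u' x = 0" using X(3) ux(3) u' by (auto simp: perp_def)
      ultimately show "beta u' u = 0" using ux(1) by (simp add: beta_add_right)
    qed
    then have "u = 0" using ux(2) U(2) by (auto simp: good_def)
    then have "z = x" using ux(1) by simp
    then have "x \<in> X \<inter> perp X" using zp(2) ux(3) by simp
    then show "z \<in> {0}" using X(2) \<open>z = x\<close> unfolding good_def by blast
  qed
  moreover have "0 \<in> vec.span (U \<union> X) \<inter> perp (vec.span (U \<union> X))"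
    by (simp add: vec.span_zero perp_def)
  ultimately have "good (vec.span (U \<union> X))" unfolding good_def by blast
  then show ?thesis using d by simp
qed

lemma point_good:
  assumes "beta a a = 1"
  shows "a \<noteq> 0" "good (vec.span {a})" "vec.dim (vec.span {a}) = 1" "perp (vec.span {a}) = perp {a}"
proof -
  show a0: "a \<noteq> 0" using assms by (auto simp: beta_def)
  show "vec.dim (vec.span {a}) = 1" using a0 by simp
  show "perp (vec.span {a}) = perp {a}" by (rule perp_span)
  have "a \<notin> perp {a}" using assms by (simp add: perp_def)
  then have "{0, a} \<inter> perp {0, a} = {0}" by (auto simp: perp_def)
  then show "good (vec.span {a})" by (simp add: good_def span_single)
qed


lemma Klem:
  assumes W: "vec.subspace W" "good W" "4 \<le> vec.dim W" and a: "a \<in> W" "beta a a = 1"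
  shows "\<exists>a'\<in>W. beta a' a' = 1 \<and> (\<exists>x\<in>W \<inter> perp {a'}. beta x x = 1)"
proof (cases "\<exists>x\<in>W \<inter> perp {a}. beta x x = 1")
  case True then show ?thesis using a by blast
next
  case False
  have alt: "beta x x = 0" if "x \<in> W \<inter> perp {a}" for x
    using False that beta_cases[of x x] by blast
  define P where "P = vec.span {a}"
  have P: "vec.subspace P" "good P" "P \<subseteq> W" "perp P = perp {a}" "vec.dim P = 1"
    using point_good[OF a(2)] span_single_sub[OF W(1) a(1)] by (simp_all add: P_def)
  define Wa where "Wa = W \<inter> perp {a}"
  have gc: "good Wa" "vec.dim Wa + 1 = vec.dim W"
    using good_comp[OF W(1,2) P(1,2,3)] P(4,5) unfolding Wa_def by simp_all
  have Was: "vec.subspace Wa" unfolding Wa_def by (rule vec.subspace_inter[OF W(1) perp_subspace])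
  define K where "K = Wa \<inter> lperp {a}"
  have Ks: "vec.subspace K" unfolding K_def by (rule vec.subspace_inter[OF Was lperp_subspace])
  have KW: "K \<subseteq> Wa" unfolding K_def by blast
  have "lperp {a} = lperp P" by (simp add: P_def lperp_span)
  then have dl: "vec.dim (lperp {a}) = CARD('n) - 1" using lperp_dim[OF P(1)] P(5) by simp
  have e1: "vec.dim (vec.span (Wa \<union> lperp {a})) + vec.dim K = vec.dim Wa + vec.dim (lperp {a})"
    unfolding K_def by (rule dim_sum[OF Was lperp_subspace])
  have e2: "vec.dim (vec.span (Wa \<union> lperp {a})) \<le> CARD('n)" by (rule dim_le_N)
  have dK: "vec.dim W \<le> vec.dim K + 2" using e1 e2 dl gc(2) N3 by arith
  have "\<exists>w\<in>K. \<exists>u\<in>K. beta w u = 1"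
  proof (rule ccontr)
    assume h: "\<not> (\<exists>w\<in>K. \<exists>u\<in>K. beta w u = 1)"
    have "K \<subseteq> perp K"
    proof
      fix u assume u: "u \<in> K"
      have "beta w u = 0" if "w \<in> K" for w using h u that beta_cases[of w u] by blast
      then show "u \<in> perp K" by (simp add: perp_def)
    qed
    then have "K \<subseteq> Wa \<inter> perp K" using KW by blast
    then have "vec.dim K \<le> vec.dim (Wa \<inter> perp K)" by (rule vec.dim_subset)
    moreover have "vec.dim (Wa \<inter> perp K) + vec.dim K = vec.dim Wa" by (rule UB[OF Was gc(1) Ks KW])
    ultimately show False using dK gc(2) W(3) by linarith
  qed
  then obtain w u where wu: "w \<in> K" "u \<in> K" "beta w u = 1" by blast
  have w: "w \<in> W" "beta a w = 0" "beta w a = 0" "beta w w = 0"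
    using wu(1) alt[of w] unfolding K_def Wa_def perp_def lperp_def by auto
  have u: "u \<in> W" "beta a u = 0" "beta u a = 0" "beta u u = 0"
    using wu(2) alt[of u] unfolding K_def Wa_def perp_def lperp_def by auto
  define a' where "a' = a + w"
  define x where "x = a + u"
  have inW: "a' \<in> W" "x \<in> W" unfolding a'_def x_def using W(1) a(1) w(1) u(1) by (simp_all add: vec.subspace_add)
  have b1: "beta a' a' = 1" unfolding a'_def by (simp add: beta_add_left beta_add_right a(2) w)
  have b2: "beta x x = 1" unfolding x_def by (simp add: beta_add_left beta_add_right a(2) u)
  have b3: "beta a' x = 0" unfolding a'_def x_def by (simp add: beta_add_left beta_add_right a(2) w u wu(3))
  then have "x \<in> W \<inter> perp {a'}" using inW by (simp add: perp_def)
  then show ?thesis using inW b1 b2 by blast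
qed

definition chainW :: "(bit^'n) set \<Rightarrow> (bit^'n) set set \<Rightarrow> nat set \<Rightarrow> bool" where
  "chainW W F J \<longleftrightarrow> (\<forall>X\<in>F. vec.subspace X \<and> X \<subseteq> W \<and> good X) \<and> (\<forall>X\<in>F. \<forall>Y\<in>F. X \<subseteq> Y \<or> Y \<subseteq> X) \<and> vec.dim ` F = J"

lemma skip:
  assumes "vec.subspace W" "good W" "vec.dim W = m" "a \<in> W" "beta a a = 1" "1 \<le> i" "i < m"
  shows "\<exists>F. chainW W F ({1..<m} - {i})"
  using assms
proof (induction m arbitrary: W a i rule: less_induct)
  case (less m)
  note W = less.prems(1,2,3) and a = less.prems(4,5)
  have step2: "\<exists>F. chainW W F ({1..<m} - {j})" if j: "2 \<le> j" "j < m" for j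
  proof (cases "m = 3")
    case True
    then have j2: "j = 2" using j by simp
    define P where "P = vec.span {a}"
    have P: "vec.subspace P" "good P" "P \<subseteq> W" "vec.dim P = 1"
      using point_good[OF a(2)] span_single_sub[OF W(1) a(1)] by (simp_all add: P_def)
    have J: "{1..<m} - {j} = {1::nat}" using True j2 by auto
    have "chainW W {P} ({1..<m} - {j})" unfolding chainW_def J using P by auto
    then show ?thesis by blast
  next
    case False
    then have m4: "4 \<le> m" using j by simp
    obtain a' x where a': "a' \<in> W" "beta a' a' = 1" and x: "x \<in> W \<inter> perp {a'}" "beta x x = 1"
      using Klem[OF W(1,2) _ a] m4 W(3) by auto
    define P where "P = vec.span {a'}"
    have P: "vec.subspace P" "good P" "P \<subseteq> W" "perp P = perp {a'}" "vec.dim P = 1"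
      using point_good[OF a'(2)] span_single_sub[OF W(1) a'(1)] by (simp_all add: P_def)
    define W' where "W' = W \<inter> perp {a'}"
    have gc: "good W'" "vec.dim W' + 1 = m"
      using good_comp[OF W(1,2) P(1,2,3)] P(4,5) W(3) unfolding W'_def by simp_all
    have W's: "vec.subspace W'" unfolding W'_def by (rule vec.subspace_inter[OF W(1) perp_subspace])
    have xW': "x \<in> W'" using x(1) unfolding W'_def .
    have "\<exists>F'. chainW W' F' ({1..<m - 1} - {j - 1})"
      by (rule less.IH[of "m - 1" W' x "j - 1"]) (use W's gc xW' x(2) j m4 in simp_all)
    then obtain F' where F': "chainW W' F' ({1..<m - 1} - {j - 1})" ..
    have memF': "vec.subspace X \<and> X \<subseteq> W' \<and> good X" if "X \<in> F'" for X
      using F' that unfolding chainW_def by simp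
    have W'P: "W' \<subseteq> perp P" unfolding W'_def P(4) by blast
    have gs: "good (vec.span (P \<union> X)) \<and> vec.dim (vec.span (P \<union> X)) = vec.dim X + 1" if "X \<in> F'" for X
    proof -
      have m: "vec.subspace X" "X \<subseteq> W'" "good X" using memF'[OF that] by simp_all
      then have "X \<subseteq> perp P" using W'P by blast
      then have "good (vec.span (P \<union> X)) \<and> vec.dim (vec.span (P \<union> X)) = vec.dim P + vec.dim X"
        by (rule good_sum[OF P(1,2) m(1) m(3)])
      then show ?thesis using P(5) by simp
    qed
    have sub: "vec.span (P \<union> X) \<subseteq> W" if "X \<in> F'" for X
    proof -
      have "P \<union> X \<subseteq> W" using P(3) memF'[OF that] unfolding W'_def by blast
      then show ?thesis using vec.span_minimal W(1) by blast
    qed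
    define F where "F = insert P ((\<lambda>X. vec.span (P \<union> X)) ` F')"
    have A1: "\<forall>X\<in>F. vec.subspace X \<and> X \<subseteq> W \<and> good X"
      unfolding F_def using P gs sub by auto
    have A2: "\<forall>X\<in>F. \<forall>Y\<in>F. X \<subseteq> Y \<or> Y \<subseteq> X"
    proof -
      have c1: "P \<subseteq> vec.span (P \<union> X)" for X
        by (meson Un_subset_iff vec.span_superset)
      have c2: "vec.span (P \<union> X) \<subseteq> vec.span (P \<union> Y) \<or> vec.span (P \<union> Y) \<subseteq> vec.span (P \<union> X)"
        if "X \<in> F'" "Y \<in> F'" for X Y
      proof -
        have "X \<subseteq> Y \<or> Y \<subseteq> X" using F' that unfolding chainW_def by blast
        then show ?thesis by (meson Un_mono order_refl vec.span_mono)
      qed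
      show ?thesis unfolding F_def using c1 c2 by blast
    qed
    have e0: "vec.dim ` F = insert (vec.dim P) ((\<lambda>X. vec.dim (vec.span (P \<union> X))) ` F')"
      unfolding F_def by (simp only: image_insert image_image)
    have e1: "(\<lambda>X. vec.dim (vec.span (P \<union> X))) ` F' = (\<lambda>X. vec.dim X + 1) ` F'"
    proof (rule image_cong[OF refl])
      fix X assume "X \<in> F'" then show "vec.dim (vec.span (P \<union> X)) = vec.dim X + 1" using gs by blast
    qed
    have "vec.dim ` F = insert 1 ((\<lambda>X. vec.dim X + 1) ` F')" by (simp only: e0 e1 P(5))
    also have "\<dots> = insert 1 ((\<lambda>k. k + 1) ` (vec.dim ` F'))" by (simp add: image_image)
    also have "\<dots> = insert 1 ((\<lambda>k. k + 1) ` ({1..<m - 1} - {j - 1}))"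
      using F' unfolding chainW_def by simp
    also have "\<dots> = {1..<m} - {j}" by (rule set_arith1[OF j])
    finally have "chainW W F ({1..<m} - {j})" unfolding chainW_def using A1 A2 by simp
    then show ?thesis by blast
  qed
  show ?case
  proof (cases "i = 1")
    case False then show ?thesis using step2 less.prems(6,7) by simp
  next
    case i1: True
    show ?thesis
    proof (cases "m = 2")
      case True
      then have "{1..<m} - {i} = {}" using i1 by auto
      then have "chainW W {} ({1..<m} - {i})" unfolding chainW_def by simp
      then show ?thesis by blast
    next
      case False
      then have m3: "3 \<le> m" using less.prems(7) i1 by simp
      have "\<exists>F. chainW W F ({1..<m} - {m - 1})" by (rule step2) (use m3 in simp_all)
      then obtain F0 where F0: "chainW W F0 ({1..<m} - {m - 1})" ..
      have mem: "vec.subspace X \<and> X \<subseteq> W \<and> good X" if "X \<in> F0" for X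
        using F0 that unfolding chainW_def by simp
      have gc: "good (W \<inter> perp X) \<and> vec.dim (W \<inter> perp X) = m - vec.dim X" if "X \<in> F0" for X
      proof -
        have m: "vec.subspace X" "good X" "X \<subseteq> W" using mem[OF that] by simp_all
        have "good (W \<inter> perp X) \<and> vec.span (X \<union> (W \<inter> perp X)) = W \<and> vec.dim (W \<inter> perp X) + vec.dim X = vec.dim W"
          by (rule good_comp[OF W(1,2) m])
        then show ?thesis using W(3) by (simp del: vec.dim_span; linarith)
      qed
      define F where "F = (\<lambda>X. W \<inter> perp X) ` F0"
      have A1: "\<forall>X\<in>F. vec.subspace X \<and> X \<subseteq> W \<and> good X"
      proof
        fix Z assume "Z \<in> F"
        then obtain X where X: "X \<in> F0" "Z = W \<inter> perp X" unfolding F_def by blast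
        have "vec.subspace Z" unfolding X(2) by (rule vec.subspace_inter[OF W(1) perp_subspace])
        then show "vec.subspace Z \<and> Z \<subseteq> W \<and> good Z" using gc[OF X(1)] X(2) by simp
      qed
      have A2: "\<forall>X\<in>F. \<forall>Y\<in>F. X \<subseteq> Y \<or> Y \<subseteq> X"
      proof -
        have "W \<inter> perp X \<subseteq> W \<inter> perp Y \<or> W \<inter> perp Y \<subseteq> W \<inter> perp X" if "X \<in> F0" "Y \<in> F0" for X Y
        proof -
          have "X \<subseteq> Y \<or> Y \<subseteq> X" using F0 that unfolding chainW_def by blast
          then show ?thesis using perp_mono by blast
        qed
        then show ?thesis unfolding F_def by blast
      qed
      have "vec.dim ` F = (\<lambda>X. m - vec.dim X) ` F0"
        unfolding F_def image_image
      proof (rule image_cong[OF refl])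
        fix X assume "X \<in> F0" then show "vec.dim (W \<inter> perp X) = m - vec.dim X" using gc by blast
      qed
      also have "\<dots> = (\<lambda>k. m - k) ` (vec.dim ` F0)" by (simp add: image_image)
      also have "\<dots> = (\<lambda>k. m - k) ` ({1..<m} - {m - 1})" using F0 unfolding chainW_def by simp
      also have "\<dots> = {1..<m} - {1}" by (rule set_arith2[OF m3])
      finally have "chainW W F ({1..<m} - {i})" unfolding chainW_def using A1 A2 i1 by simp
      then show ?thesis by blast
    qed
  qed
qed


lemma oppgood:
  assumes A: "is_simplex A" and g: "\<forall>U\<in>A. U \<inter> th U = {0}"
  shows "opp_simplices A (th ` A)"
proof -
  have Ael: "is_elem U" if "U \<in> A" for U using A that unfolding is_simplex_def by blast
  have tA: "is_simplex (th ` A)"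
    unfolding is_simplex_def
  proof (intro conjI ballI)
    fix U assume "U \<in> th ` A"
    then obtain U' where "U' \<in> A" "U = th U'" by blast
    then show "is_elem U" using th_elem[OF Ael] by simp
  next
    fix U W assume "U \<in> th ` A" "W \<in> th ` A"
    then obtain U' W' where h: "U' \<in> A" "W' \<in> A" "U = th U'" "W = th W'" by blast
    have "U' \<subseteq> W' \<or> W' \<subseteq> U'" using A h(1,2) unfolding is_simplex_def by blast
    then have "th U' \<subseteq> th W' \<or> th W' \<subseteq> th U'" using th_comp[OF Ael[OF h(1)] Ael[OF h(2)]] by simp
    then show "U \<subseteq> W \<or> W \<subseteq> U" using h(3,4) by simp
  qed
  have c1: "\<exists>D. is_chamber D \<and> th ` A \<subseteq> D \<and> opp_chambers C D" if C: "is_chamber C" "A \<subseteq> C" for C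
  proof (rule OPP[OF C(1) tA])
    show "\<forall>W\<in>th ` A. \<forall>U\<in>C. vec.dim U + vec.dim W = CARD('n) \<longrightarrow> U \<inter> W = {0}"
    proof (intro ballI impI)
      fix W U assume W: "W \<in> th ` A" and U: "U \<in> C" and t: "vec.dim U + vec.dim W = CARD('n)"
      obtain U' where U': "U' \<in> A" "W = th U'" using W by blast
      have "vec.dim W = CARD('n) - vec.dim U'" using th_dim[OF Ael[OF U'(1)]] U'(2) by simp
      then have "vec.dim U = vec.dim U'" using t dim_le_N[of U'] by simp
      then have "U = U'" using chamber_uniq[OF C(1) U] U'(1) C(2) by blast
      then show "U \<inter> W = {0}" using g U' by simp
    qed
  qed
  have c2: "\<exists>C. is_chamber C \<and> A \<subseteq> C \<and> opp_chambers C D" if D: "is_chamber D" "th ` A \<subseteq> D" for D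
  proof -
    have "\<exists>C. is_chamber C \<and> A \<subseteq> C \<and> opp_chambers D C"
    proof (rule OPP[OF D(1) A])
      show "\<forall>W\<in>A. \<forall>U\<in>D. vec.dim U + vec.dim W = CARD('n) \<longrightarrow> U \<inter> W = {0}"
      proof (intro ballI impI)
        fix W U assume W: "W \<in> A" and U: "U \<in> D" and t: "vec.dim U + vec.dim W = CARD('n)"
        have tW: "th W \<in> D" using W D(2) by blast
        have "vec.dim (th W) = CARD('n) - vec.dim W" using th_dim[OF Ael[OF W]] .
        then have "vec.dim U = vec.dim (th W)" using t by simp
        then have "U = th W" using chamber_uniq[OF D(1) U tW] by simp
        then show "U \<inter> W = {0}" using g W by blast
      qed
    qed
    then show ?thesis using opp_sym by blast
  qed
  show ?thesis unfolding opp_simplices_def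
  proof (intro conjI A tA allI impI)
    fix C assume h: "is_chamber C \<and> A \<subseteq> C"
    show "\<exists>D. is_chamber D \<and> th ` A \<subseteq> D \<and> opp_chambers C D" by (rule c1) (use h in simp_all)
  next
    fix D assume h: "is_chamber D \<and> th ` A \<subseteq> D"
    show "\<exists>C. is_chamber C \<and> A \<subseteq> C \<and> opp_chambers C D" by (rule c2) (use h in simp_all)
  qed
qed

end

theorem theorem3p11:
  fixes \<theta> :: "(bit ^ 'n::finite) set \<Rightarrow> (bit ^ 'n) set"
  assumes "CARD('n) \<ge> 3"
    and "is_duality \<theta>"
    and "exceptional_domestic \<theta>"
  shows "strongly_exceptional_domestic \<theta>"
proof -
  interpret dual \<theta> using assms(1,2) by unfold_locales
  have dom: "domestic \<theta>" using assms(3) by (simp add: exceptional_domestic_def)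
  have ts: "typeset TYPE('n) = {1..CARD('n) - 1}" by (rule typeset_eq)
  have "1 \<in> typeset TYPE('n)" using assms(1) ts by simp
  then obtain A where A: "is_simplex A" "1 \<in> simplex_type A" "opp_simplices A (\<theta> ` A)"
    using assms(3) unfolding exceptional_domestic_def by blast
  have "1 \<in> vec.dim ` A" using A(2) unfolding simplex_type_def elem_type_def .
  then obtain p where p0: "1 = vec.dim p" "p \<in> A" by (rule imageE)
  then have p: "p \<in> A" "vec.dim p = 1" by simp_all
  have pel: "is_elem p" using A(1) p(1) unfolding is_simplex_def by blast
  obtain C where C: "is_chamber C" "A \<subseteq> C" using EXT0[OF A(1)] by blast
  obtain D where D: "is_chamber D" "\<theta> ` A \<subseteq> D" "opp_chambers C D"
    using A(3) C unfolding opp_simplices_def by blast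
  have "elem_type p + elem_type (\<theta> p) = rk TYPE('n) + 1"
    using th_dim[OF pel] p(2) assms(1) by (simp add: elem_type_def rk_def)
  then have pth: "p \<inter> \<theta> p = {0}" using D(3) C(2) D(2) p(1) unfolding opp_chambers_def by blast
  obtain a where a: "a \<in> p" "a \<noteq> 0" using elem_nonzero[OF pel] by blast
  have pa: "p = vec.span {a}"
  proof -
    have s: "vec.span {a} \<subseteq> p" using span_single_sub[OF elem_sub[OF pel] a(1)] .
    have "vec.dim p \<le> vec.dim (vec.span {a})" using p(2) a(2) by simp
    then show ?thesis using subspace_eq[OF vec.subspace_span elem_sub[OF pel] s] by simp
  qed
  have aa: "beta a a = 1"
  proof (rule ccontr)
    assume "beta a a \<noteq> 1"
    then have "beta a a = 0" using beta_cases[of a a] by simp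
    then have "a \<in> perp {a}" by (simp add: perp_def)
    then have "a \<in> \<theta> p" using th_perp[OF pel] pa perp_span by simp
    then show False using pth a by blast
  qed
  have gU: "good (UNIV::(bit^'n) set)" unfolding good_def using perp_UNIV by simp
  have "\<not> J_domestic J \<theta>" if J: "J \<subset> typeset TYPE('n)" for J
  proof -
    obtain i where i: "i \<in> typeset TYPE('n)" "i \<notin> J" using J by blast
    have i2: "1 \<le> i" "i < CARD('n)" using i(1) ts assms(1) by auto
    obtain F where F: "chainW UNIV F ({1..<CARD('n)} - {i})"
      using skip[OF vec.subspace_UNIV gU dimN _ aa i2] by blast
    have Fm: "vec.subspace X \<and> good X" if "X \<in> F" for X using F that unfolding chainW_def by simp
    have Fc: "X \<subseteq> Y \<or> Y \<subseteq> X" if "X \<in> F" "Y \<in> F" for X Y using F that unfolding chainW_def by blast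
    have Fd: "vec.dim ` F = {1..<CARD('n)} - {i}" using F unfolding chainW_def by simp
    define A' where "A' = {X \<in> F. vec.dim X \<in> J}"
    have Jt: "J \<subseteq> {1..CARD('n) - 1}" using J ts by blast
    have Jsub: "J \<subseteq> {1..<CARD('n)} - {i}"
    proof
      fix j assume j: "j \<in> J"
      then have "j \<in> {1..CARD('n) - 1}" using Jt by blast
      then show "j \<in> {1..<CARD('n)} - {i}" using j i(2) assms(1) by auto
    qed
    have el: "is_elem X" if "X \<in> A'" for X
    proof -
      have "vec.dim X \<in> {1..<CARD('n)} - {i}" using Fd that unfolding A'_def by blast
      then show ?thesis using Fm that unfolding A'_def elem_iff by auto
    qed
    have As: "is_simplex A'" unfolding is_simplex_def using el Fc unfolding A'_def by blast
    have At: "simplex_type A' = J"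
    proof
      show "simplex_type A' \<subseteq> J" unfolding simplex_type_def elem_type_def A'_def by blast
      show "J \<subseteq> simplex_type A'"
      proof
        fix j assume "j \<in> J"
        then have "j \<in> vec.dim ` F" using Jsub Fd by blast
        then obtain X where "X \<in> F" "vec.dim X = j" by blast
        then show "j \<in> simplex_type A'" unfolding simplex_type_def elem_type_def A'_def
          using \<open>j \<in> J\<close> by blast
      qed
    qed
    have "\<forall>U\<in>A'. U \<inter> \<theta> U = {0}"
    proof
      fix U assume U: "U \<in> A'"
      have "good U" using Fm U unfolding A'_def by blast
      then show "U \<inter> \<theta> U = {0}" using th_perp[OF el[OF U]] unfolding good_def by simp
    qed
    then have "opp_simplices A' (\<theta> ` A')" by (rule oppgood[OF As])
    then show ?thesis unfolding J_domestic_def using As At by blast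
  qed
  then show ?thesis unfolding strongly_exceptional_domestic_def using dom by blast
qed

end
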